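(* If $\mathbb{A}_\Gamma$ is a non-abelian right-angled Artin group (with $\Gamma$ a finite simplicial graph), then $\mathrm{Aut}(\mathbb{A}_\Gamma)$ involves all finite groups.
   Context: $\mathbb{A}_\Gamma$ has the vertices of $\Gamma$ as generators and relations $[u,v]=1$ for each edge. A group $G$ involves all finite groups if every finite group is a quotient of some finite index subgroup of $G$. *)

theory Defs
  imports "HOL-Algebra.Algebra"
begin

text \<open>Words are lists of letters (v, b), where
  (v, True) stands for the generator v and (v, False) for its inverse.\<close>

inductive_set raag_step :: "'v set \<Rightarrow> ('v \<Rightarrow> 'v \<Rightarrow> bool)
    \<Rightarrow> (('v \<times> bool) list \<times> ('v \<times> bool) list) set"
  for V E where
  cancel: "x \<in> V \<Longrightarrow> (u @ [(x, b), (x, \<not> b)] @ w, u @ w) \<in> raag_step V E"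
| commute: "E x y \<Longrightarrow> (u @ [(x, b), (y, c)] @ w, u @ [(y, c), (x, b)] @ w) \<in> raag_step V E"

definition raag_rel :: "'v set \<Rightarrow> ('v \<Rightarrow> 'v \<Rightarrow> bool)
    \<Rightarrow> (('v \<times> bool) list \<times> ('v \<times> bool) list) set" where
  "raag_rel V E = (raag_step V E \<union> (raag_step V E)\<inverse>)\<^sup>*"

definition raag_words :: "'v set \<Rightarrow> ('v \<times> bool) list set" where
  "raag_words V = {w. set w \<subseteq> V \<times> UNIV}"

definition RAAG :: "'v set \<Rightarrow> ('v \<Rightarrow> 'v \<Rightarrow> bool) \<Rightarrow> ('v \<times> bool) list set monoid" where
  "RAAG V E = \<lparr> carrier = raag_words V // raag_rel V E,
      monoid.mult = (\<lambda>A B. \<Union>a\<in>A. \<Union>b\<in>B. raag_rel V E `` {a @ b}),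
      monoid.one = raag_rel V E `` {[]} \<rparr>"

text \<open>G involves all finite groups: every finite group is a quotient of a
  finite-index subgroup of G. Finite groups are represented (up to isomorphism)
  by groups with carrier a subset of nat.\<close>
definition involves_all_finite_groups :: "('a, 'b) monoid_scheme \<Rightarrow> bool" where
  "involves_all_finite_groups G \<longleftrightarrow>
     (\<forall>F :: nat monoid. group F \<and> finite (carrier F) \<longrightarrow>
        (\<exists>H. subgroup H G \<and> finite (rcosets\<^bsub>G\<^esub> H) \<and>
           (\<exists>h. h \<in> hom (G\<lparr>carrier := H\<rparr>) F \<and> h ` H = carrier F)))"

end

theory Submission
  imports Defs
begin


lemma raag_rel_refl: "(w,w) \<in> raag_rel V E"
  by (simp add: raag_rel_def)

lemma raag_rel_sym: "(a,b) \<in> raag_rel V E \<Longrightarrow> (b,a) \<in> raag_rel V E"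
proof -
  let ?r = "raag_step V E \<union> (raag_step V E)\<inverse>"
  assume "(a,b) \<in> raag_rel V E"
  hence "(b,a) \<in> (?r\<inverse>)\<^sup>*" unfolding raag_rel_def by (simp add: rtrancl_converseI)
  moreover have "?r\<inverse> = ?r" by auto
  ultimately show ?thesis unfolding raag_rel_def by simp
qed

lemma raag_rel_trans: "(a,b) \<in> raag_rel V E \<Longrightarrow> (b,c) \<in> raag_rel V E \<Longrightarrow> (a,c) \<in> raag_rel V E"
  unfolding raag_rel_def by (rule rtrancl_trans)

lemma raag_step_append: "(a,b) \<in> raag_step V E \<Longrightarrow> (p@a@q, p@b@q) \<in> raag_step V E"
proof (induction rule: raag_step.induct)
  case (cancel x u b w)
  from raag_step.cancel[OF cancel, of "p@u" b "w@q"] show ?case by simp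
next
  case (commute x y u b c w)
  from raag_step.commute[where E=E and x=x and y=y and V=V and u="p@u" and b=b and c=c and w="w@q", OF commute] show ?case by simp
qed

lemma raag_rel_append: "(a,b) \<in> raag_rel V E \<Longrightarrow> (p@a@q, p@b@q) \<in> raag_rel V E"
  unfolding raag_rel_def
proof (induction rule: rtrancl_induct)
  case base then show ?case by simp
next
  case (step y z)
  from step(2) have "(p@y@q, p@z@q) \<in> raag_step V E \<union> (raag_step V E)\<inverse>"
    using raag_step_append by blast
  with step(3) show ?case by (rule rtrancl_into_rtrancl)
qed

lemma raag_rel_app2: "(a,a') \<in> raag_rel V E \<Longrightarrow> (b,b') \<in> raag_rel V E \<Longrightarrow> (a@b, a'@b') \<in> raag_rel V E"
  using raag_rel_append[of a a' V E "[]" b] raag_rel_append[of b b' V E a' "[]"] raag_rel_trans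
  by fastforce

lemma raag_class_eq: "(raag_rel V E `` {a} = raag_rel V E `` {b}) \<longleftrightarrow> (a,b) \<in> raag_rel V E"
  by (auto intro: raag_rel_trans raag_rel_sym raag_rel_refl)

lemma raag_words_append: "a \<in> raag_words V \<Longrightarrow> b \<in> raag_words V \<Longrightarrow> a@b \<in> raag_words V"
  by (auto simp: raag_words_def)

lemma RAAG_carrier: "A \<in> carrier (RAAG V E) \<longleftrightarrow> (\<exists>w\<in>raag_words V. A = raag_rel V E `` {w})"
  by (auto simp: RAAG_def quotient_def)

lemma RAAG_one: "\<one>\<^bsub>RAAG V E\<^esub> = raag_rel V E `` {[]}"
  by (simp add: RAAG_def)

lemma RAAG_mult: "raag_rel V E `` {a} \<otimes>\<^bsub>RAAG V E\<^esub> raag_rel V E `` {b} = raag_rel V E `` {a@b}"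
proof -
  have "(\<Union>a'\<in>raag_rel V E `` {a}. \<Union>b'\<in>raag_rel V E `` {b}. raag_rel V E `` {a' @ b'}) = raag_rel V E `` {a@b}"
  proof
    show "(\<Union>a'\<in>raag_rel V E `` {a}. \<Union>b'\<in>raag_rel V E `` {b}. raag_rel V E `` {a' @ b'}) \<subseteq> raag_rel V E `` {a@b}"
      using raag_rel_app2 raag_rel_trans by fastforce
    show "raag_rel V E `` {a@b} \<subseteq> (\<Union>a'\<in>raag_rel V E `` {a}. \<Union>b'\<in>raag_rel V E `` {b}. raag_rel V E `` {a' @ b'})"
      using raag_rel_refl by fastforce
  qed
  thus ?thesis by (simp add: RAAG_def)
qed

definition invw :: "('v \<times> bool) list \<Rightarrow> ('v \<times> bool) list" where
  "invw w = rev (map (\<lambda>(x,b). (x, \<not> b)) w)"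

lemma invw_words: "w \<in> raag_words V \<Longrightarrow> invw w \<in> raag_words V"
  by (auto simp: raag_words_def invw_def)

lemma invw_cancel: "w \<in> raag_words V \<Longrightarrow> (invw w @ w, []) \<in> raag_rel V E"
proof (induction w)
  case Nil then show ?case by (simp add: invw_def raag_rel_refl)
next
  case (Cons p w)
  obtain x b where p: "p = (x,b)" by force
  from Cons.prems p have x: "x \<in> V" and ww: "w \<in> raag_words V" by (auto simp: raag_words_def)
  have "(invw w @ [(x,\<not>b),(x,\<not>\<not>b)] @ w, invw w @ w) \<in> raag_step V E"
    by (rule raag_step.cancel[OF x])
  hence "(invw (p#w) @ (p#w), invw w @ w) \<in> raag_rel V E"
    unfolding raag_rel_def by (auto simp: p invw_def)
  from raag_rel_trans[OF this Cons.IH[OF ww]] show ?case .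
qed

lemma RAAG_group: "group (RAAG V E)"
proof (rule groupI)
  fix x y assume "x \<in> carrier (RAAG V E)" "y \<in> carrier (RAAG V E)"
  then show "x \<otimes>\<^bsub>RAAG V E\<^esub> y \<in> carrier (RAAG V E)"
    by (auto simp: RAAG_carrier RAAG_mult intro: raag_words_append)
next
  show "\<one>\<^bsub>RAAG V E\<^esub> \<in> carrier (RAAG V E)"
    unfolding RAAG_carrier RAAG_one by (rule bexI[of _ "[]"]) (auto simp: raag_words_def)
next
  fix x y z assume "x \<in> carrier (RAAG V E)" "y \<in> carrier (RAAG V E)" "z \<in> carrier (RAAG V E)"
  then show "x \<otimes>\<^bsub>RAAG V E\<^esub> y \<otimes>\<^bsub>RAAG V E\<^esub> z = x \<otimes>\<^bsub>RAAG V E\<^esub> (y \<otimes>\<^bsub>RAAG V E\<^esub> z)"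
    by (auto simp: RAAG_carrier RAAG_mult)
next
  fix x assume "x \<in> carrier (RAAG V E)"
  then show "\<one>\<^bsub>RAAG V E\<^esub> \<otimes>\<^bsub>RAAG V E\<^esub> x = x"
    by (auto simp: RAAG_carrier RAAG_mult RAAG_one)
next
  fix x assume "x \<in> carrier (RAAG V E)"
  then obtain w where w: "w \<in> raag_words V" "x = raag_rel V E `` {w}" by (auto simp: RAAG_carrier)
  show "\<exists>y\<in>carrier (RAAG V E). y \<otimes>\<^bsub>RAAG V E\<^esub> x = \<one>\<^bsub>RAAG V E\<^esub>"
  proof (intro bexI)
    show "raag_rel V E `` {invw w} \<otimes>\<^bsub>RAAG V E\<^esub> x = \<one>\<^bsub>RAAG V E\<^esub>"
      using w invw_cancel[OF w(1), of E] by (simp add: RAAG_mult RAAG_one raag_class_eq)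
    show "raag_rel V E `` {invw w} \<in> carrier (RAAG V E)"
      using w invw_words by (auto simp: RAAG_carrier)
  qed
qed



lemma (in group) comm_inv_left:
  assumes "a \<in> carrier G" "b \<in> carrier G" "a \<otimes> b = b \<otimes> a"
  shows "inv a \<otimes> b = b \<otimes> inv a"
proof -
  have "inv a \<otimes> b = inv a \<otimes> (b \<otimes> a) \<otimes> inv a" using assms
    by (metis m_assoc r_inv r_one inv_closed m_closed)
  also have "\<dots> = inv a \<otimes> (a \<otimes> b) \<otimes> inv a" using assms by simp
  also have "\<dots> = b \<otimes> inv a" using assms
    by (metis m_assoc l_inv l_one inv_closed m_closed)
  finally show ?thesis .
qed

lemma (in group) comm_letters:
  assumes "a \<in> carrier G" "b \<in> carrier G" "a \<otimes> b = b \<otimes> a"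
  shows "(if s then a else inv a) \<otimes> (if t then b else inv b) = (if t then b else inv b) \<otimes> (if s then a else inv a)"
proof -
  have 1: "inv a \<otimes> b = b \<otimes> inv a" using comm_inv_left assms by blast
  have 2: "a \<otimes> inv b = inv b \<otimes> a" using comm_inv_left[of b a] assms by simp
  have 3: "inv a \<otimes> inv b = inv b \<otimes> inv a" using comm_inv_left[of a "inv b"] 2 assms by simp
  show ?thesis using assms 1 2 3 by auto
qed

fun raag_ev :: "('g,'z) monoid_scheme \<Rightarrow> ('v \<Rightarrow> 'g) \<Rightarrow> ('v \<times> bool) list \<Rightarrow> 'g" where
  "raag_ev S f [] = \<one>\<^bsub>S\<^esub>"
| "raag_ev S f (p # w) = (if snd p then f (fst p) else inv\<^bsub>S\<^esub> (f (fst p))) \<otimes>\<^bsub>S\<^esub> raag_ev S f w"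

context group begin

lemma raag_ev_closed: "(\<And>x. f x \<in> carrier G) \<Longrightarrow> raag_ev G f w \<in> carrier G"
  by (induction w) auto

lemma raag_ev_append: "(\<And>x. f x \<in> carrier G) \<Longrightarrow> raag_ev G f (a @ b) = raag_ev G f a \<otimes> raag_ev G f b"
  by (induction a) (auto simp: raag_ev_closed m_assoc)

lemma raag_ev_step:
  assumes f: "\<And>x. f x \<in> carrier G" and c: "\<And>x y. E x y \<Longrightarrow> f x \<otimes> f y = f y \<otimes> f x"
  assumes "(a, b) \<in> raag_step V E"
  shows "raag_ev G f a = raag_ev G f b"
  using assms(3)
proof (induction rule: raag_step.induct)
  case (cancel x u b w)
  have ew: "raag_ev G f w \<in> carrier G" by (rule raag_ev_closed[where f=f, OF f])
  have "raag_ev G f ([(x, b), (x, \<not> b)] @ w) = raag_ev G f w"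
  proof (cases b)
    case True
    then show ?thesis using f[of x] ew by (simp add: m_assoc[symmetric] del: m_assoc)
  next
    case False
    then show ?thesis using f[of x] ew by (simp add: m_assoc[symmetric] del: m_assoc)
  qed
  then show ?case using f by (simp add: raag_ev_append[where f=f and a=u, OF f] del: raag_ev.simps)
next
  case (commute x y u b c w)
  have ew: "raag_ev G f w \<in> carrier G" by (rule raag_ev_closed[where f=f, OF f])
  define lx where "lx = (if b then f x else inv f x)"
  define ly where "ly = (if c then f y else inv f y)"
  have cl: "lx \<in> carrier G" "ly \<in> carrier G" unfolding lx_def ly_def by (auto simp: f)
  have cm: "lx \<otimes> ly = ly \<otimes> lx" unfolding lx_def ly_def by (rule comm_letters[OF f f c[OF commute]])
  have "raag_ev G f ([(x, b), (y, c)] @ w) = lx \<otimes> (ly \<otimes> raag_ev G f w)" by (simp add: lx_def ly_def)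
  also have "\<dots> = (lx \<otimes> ly) \<otimes> raag_ev G f w" using cl ew by (simp add: m_assoc)
  also have "\<dots> = (ly \<otimes> lx) \<otimes> raag_ev G f w" using cm by simp
  also have "\<dots> = ly \<otimes> (lx \<otimes> raag_ev G f w)" using cl ew by (simp add: m_assoc)
  also have "\<dots> = raag_ev G f ([(y, c), (x, b)] @ w)" by (simp add: lx_def ly_def)
  finally have "raag_ev G f ([(x, b), (y, c)] @ w) = raag_ev G f ([(y, c), (x, b)] @ w)" .
  then show ?case using f by (simp add: raag_ev_append[where f=f and a=u, OF f] del: raag_ev.simps)
qed

lemma raag_ev_rel:
  assumes f: "\<And>x. f x \<in> carrier G" and c: "\<And>x y. E x y \<Longrightarrow> f x \<otimes> f y = f y \<otimes> f x"
  assumes "(a, b) \<in> raag_rel V E"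
  shows "raag_ev G f a = raag_ev G f b"
  using assms(3) unfolding raag_rel_def
proof (induction rule: rtrancl_induct)
  case base then show ?case by simp
next
  case (step y z)
  then show ?case using raag_ev_step[where f=f and E=E and a=y and b=z, OF f c] raag_ev_step[where f=f and E=E and a=z and b=y, OF f c] by auto
qed

end

definition raag_hom :: "'v set \<Rightarrow> ('v \<Rightarrow> 'v \<Rightarrow> bool) \<Rightarrow> ('g,'z) monoid_scheme \<Rightarrow> ('v \<Rightarrow> 'g) \<Rightarrow> ('v \<times> bool) list set \<Rightarrow> 'g" where
  "raag_hom V E S f = (\<lambda>A. raag_ev S f (SOME w. w \<in> A))"

lemma (in group) raag_hom_class:
  assumes f: "\<And>x. f x \<in> carrier G" and c: "\<And>x y. E x y \<Longrightarrow> f x \<otimes> f y = f y \<otimes> f x"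
  shows "raag_hom V E G f (raag_rel V E `` {w}) = raag_ev G f w"
proof -
  have "(SOME w'. w' \<in> raag_rel V E `` {w}) \<in> raag_rel V E `` {w}"
    by (rule someI[of _ w]) (simp add: raag_rel_refl)
  hence "(w, SOME w'. w' \<in> raag_rel V E `` {w}) \<in> raag_rel V E" by simp
  thus ?thesis unfolding raag_hom_def using raag_ev_rel[where f=f and E=E, OF f c] by metis
qed

lemma (in group) raag_hom_hom:
  assumes f: "\<And>x. f x \<in> carrier G" and c: "\<And>x y. E x y \<Longrightarrow> f x \<otimes> f y = f y \<otimes> f x"
  shows "raag_hom V E G f \<in> hom (RAAG V E) G"
proof (rule homI)
  fix A assume "A \<in> carrier (RAAG V E)"
  then obtain w where "A = raag_rel V E `` {w}" by (auto simp: RAAG_carrier)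
  then show "raag_hom V E G f A \<in> carrier G" using raag_hom_class[where f=f and E=E, OF f c] raag_ev_closed[where f=f, OF f] by simp
next
  fix A B assume "A \<in> carrier (RAAG V E)" "B \<in> carrier (RAAG V E)"
  then obtain a b where "A = raag_rel V E `` {a}" "B = raag_rel V E `` {b}" by (auto simp: RAAG_carrier)
  then show "raag_hom V E G f (A \<otimes>\<^bsub>RAAG V E\<^esub> B) = raag_hom V E G f A \<otimes> raag_hom V E G f B"
    by (simp add: RAAG_mult raag_hom_class[where f=f and E=E, OF f c] raag_ev_append[where f=f, OF f])
qed

definition raag_gen :: "'v set \<Rightarrow> ('v \<Rightarrow> 'v \<Rightarrow> bool) \<Rightarrow> 'v \<Rightarrow> ('v \<times> bool) list set" where
  "raag_gen V E x = raag_rel V E `` {[(x, True)]}"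

lemma (in group) raag_hom_gen:
  assumes f: "\<And>x. f x \<in> carrier G" and c: "\<And>x y. E x y \<Longrightarrow> f x \<otimes> f y = f y \<otimes> f x"
  shows "raag_hom V E G f (raag_gen V E x) = f x"
  using f by (simp add: raag_gen_def raag_hom_class[where f=f and E=E, OF f c])

lemma raag_gen_carrier: "x \<in> V \<Longrightarrow> raag_gen V E x \<in> carrier (RAAG V E)"
  unfolding raag_gen_def RAAG_carrier by (rule bexI[of _ "[(x,True)]"]) (auto simp: raag_words_def)

lemma raag_gen_inv: assumes "x \<in> V"
  shows "inv\<^bsub>RAAG V E\<^esub> (raag_gen V E x) = raag_rel V E `` {[(x, False)]}"
proof -
  interpret R: group "RAAG V E" by (rule RAAG_group)
  have "(raag_rel V E `` {[(x, False)]}) \<otimes>\<^bsub>RAAG V E\<^esub> raag_gen V E x = \<one>\<^bsub>RAAG V E\<^esub>"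
  proof -
    have "([] @ [(x, False), (x, \<not> False)] @ [], [] @ []) \<in> raag_step V E"
      by (rule raag_step.cancel[OF assms])
    hence "([(x, False), (x, True)], []) \<in> raag_rel V E" unfolding raag_rel_def by auto
    thus ?thesis by (simp add: raag_gen_def RAAG_mult RAAG_one raag_class_eq)
  qed
  moreover have "raag_rel V E `` {[(x, False)]} \<in> carrier (RAAG V E)"
    unfolding RAAG_carrier by (rule bexI[of _ "[(x,False)]"]) (auto simp: raag_words_def assms)
  ultimately show ?thesis using R.inv_equality raag_gen_carrier[OF assms] by metis
qed

lemma raag_hom_ext:
  assumes G: "group G" and h1: "h1 \<in> hom (RAAG V E) G" and h2: "h2 \<in> hom (RAAG V E) G"
    and eq: "\<And>x. x \<in> V \<Longrightarrow> h1 (raag_gen V E x) = h2 (raag_gen V E x)"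
    and A: "A \<in> carrier (RAAG V E)"
  shows "h1 A = h2 A"
proof -
  interpret R: group "RAAG V E" by (rule RAAG_group)
  interpret g1: group_hom "RAAG V E" G h1 by (intro group_hom.intro group_hom_axioms.intro RAAG_group G h1)
  interpret g2: group_hom "RAAG V E" G h2 by (intro group_hom.intro group_hom_axioms.intro RAAG_group G h2)
  from A obtain w where w: "w \<in> raag_words V" "A = raag_rel V E `` {w}" by (auto simp: RAAG_carrier)
  have "w \<in> raag_words V \<Longrightarrow> h1 (raag_rel V E `` {w}) = h2 (raag_rel V E `` {w})"
  proof (induction w)
    case Nil then show ?case by (simp add: RAAG_one[symmetric])
  next
    case (Cons p w)
    obtain x b where p: "p = (x,b)" by force
    from Cons.prems p have x: "x \<in> V" and ww: "w \<in> raag_words V" by (auto simp: raag_words_def)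
    have wc: "raag_rel V E `` {w} \<in> carrier (RAAG V E)" using ww by (auto simp: RAAG_carrier)
    have pc: "raag_rel V E `` {[p]} \<in> carrier (RAAG V E)"
      unfolding RAAG_carrier by (rule bexI[of _ "[p]"]) (auto simp: raag_words_def p x)
    have split: "raag_rel V E `` {p # w} = raag_rel V E `` {[p]} \<otimes>\<^bsub>RAAG V E\<^esub> raag_rel V E `` {w}"
      by (simp add: RAAG_mult)
    have hp: "h1 (raag_rel V E `` {[p]}) = h2 (raag_rel V E `` {[p]})"
    proof (cases b)
      case True then show ?thesis using eq[OF x] by (simp add: p raag_gen_def)
    next
      case False
      then have "raag_rel V E `` {[p]} = inv\<^bsub>RAAG V E\<^esub> (raag_gen V E x)" using raag_gen_inv[OF x] p by simp
      then show ?thesis using eq[OF x] raag_gen_carrier[OF x] by simp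
    qed
    show ?case using Cons.IH[OF ww] hp split wc pc by simp
  qed
  with w show ?thesis by simp
qed



definition cyc :: "nat \<Rightarrow> nat \<Rightarrow> nat" where
  "cyc N i = (if 1 \<le> i \<and> i < N then i + 1 else if i = N then 1 else i)"

lemma cyc_permutes: assumes "1 \<le> N" shows "cyc N permutes {1..N}"
proof (rule bij_imp_permutes)
  show "bij_betw (cyc N) {1..N} {1..N}"
  proof (rule bij_betw_imageI)
    show "inj_on (cyc N) {1..N}" unfolding inj_on_def cyc_def by auto
    show "cyc N ` {1..N} = {1..N}"
    proof
      show "cyc N ` {1..N} \<subseteq> {1..N}" using assms by (auto simp: cyc_def)
      show "{1..N} \<subseteq> cyc N ` {1..N}"
      proof
        fix y assume y: "y \<in> {1..N}"
        show "y \<in> cyc N ` {1..N}"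
        proof (cases "y = 1")
          case True then show ?thesis using assms by (intro image_eqI[of _ _ N]) (auto simp: cyc_def)
        next
          case False then show ?thesis using y by (intro image_eqI[of _ _ "y - 1"]) (auto simp: cyc_def)
        qed
      qed
    qed
  qed
  show "\<And>x. x \<notin> {1..N} \<Longrightarrow> cyc N x = x" using assms by (auto simp: cyc_def)
qed

lemma conj_transpose:
  assumes "bij p" shows "p \<circ> Transposition.transpose a b \<circ> inv' p = Transposition.transpose (p a) (p b)"
proof -
  have "Transposition.transpose (p a) (p b) \<circ> p = p \<circ> Transposition.transpose (inv' p (p a)) (inv' p (p b))"
    by (rule transpose_comp_eq[OF assms])
  also have "\<dots> = p \<circ> Transposition.transpose a b" using assms by (simp add: bij_is_inj)
  finally have "Transposition.transpose (p a) (p b) \<circ> p \<circ> inv' p = p \<circ> Transposition.transpose a b \<circ> inv' p" by simp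
  moreover have pid: "p \<circ> inv' p = id" by (metis assms bij_is_surj surj_iff)
  ultimately show ?thesis by (metis comp_assoc comp_id)
qed

lemma sym_conj_closed:
  assumes K: "subgroup K (sym_group N)" and p: "p \<in> K" and t: "t \<in> K"
  shows "p \<circ> t \<circ> inv' p \<in> K"
proof -
  interpret S: group "sym_group N" by (rule sym_group_is_group)
  have pc: "p \<in> carrier (sym_group N)" using K p subgroup.subset by blast
  have "p \<otimes>\<^bsub>sym_group N\<^esub> t \<otimes>\<^bsub>sym_group N\<^esub> inv\<^bsub>sym_group N\<^esub> p \<in> K"
    using K p t by (intro subgroup.m_closed subgroup.m_inv_closed) auto
  then show ?thesis using pc by (simp add: sym_group_mult)
qed

lemma sym_generated:
  assumes N: "2 \<le> N" and K: "subgroup K (sym_group N)"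
    and a: "Transposition.transpose 1 2 \<in> K" and c: "cyc N \<in> K"
    and p: "p permutes {1..N}"
  shows "p \<in> K"
proof -
  interpret S: group "sym_group N" by (rule sym_group_is_group)
  have bc: "bij (cyc N)" using cyc_permutes[of N] N permutes_bij by auto
  have adj: "Transposition.transpose i (i+1) \<in> K" if "1 \<le> i" "i < N" for i
    using that
  proof (induction i)
    case 0 then show ?case by simp
  next
    case (Suc i)
    show ?case
    proof (cases "i = 0")
      case True then show ?thesis using a by (simp add: numeral_2_eq_2)
    next
      case False
      then have "Transposition.transpose i (i+1) \<in> K" using Suc by auto
      from sym_conj_closed[OF K c this] have "Transposition.transpose (cyc N i) (cyc N (i+1)) \<in> K"
        using conj_transpose[OF bc] by simp
      moreover have "cyc N i = Suc i" "cyc N (i+1) = Suc i + 1" using False Suc.prems by (auto simp: cyc_def)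
      ultimately show ?thesis by simp
    qed
  qed
  have tr: "Transposition.transpose i j \<in> K" if "1 \<le> i" "i < j" "j \<le> N" for i j
    using that
  proof (induction j)
    case 0 then show ?case by simp
  next
    case (Suc j)
    show ?case
    proof (cases "j = i")
      case True then show ?thesis using adj Suc.prems by simp
    next
      case False
      then have ij: "i < j" using Suc.prems by simp
      have t: "Transposition.transpose j (j+1) \<in> K" using adj ij Suc.prems by simp
      have "Transposition.transpose i j \<in> K" using Suc ij by simp
      from sym_conj_closed[OF K t this]
      have "Transposition.transpose (Transposition.transpose j (j+1) i) (Transposition.transpose j (j+1) j) \<in> K"
        using conj_transpose[of "Transposition.transpose j (j+1)" i j] by simp
      then show ?thesis using ij by simp
    qed
  qed
  have tr2: "Transposition.transpose i j \<in> K" if "i \<in> {1..N}" "j \<in> {1..N}" for i j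
  proof -
    have one: "id \<in> K" using subgroup.one_closed[OF K] by (simp add: sym_group_one)
    consider "i = j" | "i < j" | "j < i" by linarith
    then show ?thesis
    proof cases
      case 1 then show ?thesis using one by simp
    next
      case 2 then show ?thesis using tr that by auto
    next
      case 3 then show ?thesis using tr[of j i] that by (auto simp: transpose_commute)
    qed
  qed
  show ?thesis using p finite_atLeastAtMost[of 1 N]
  proof (induction rule: permutes_induct)
    case id then show ?case using subgroup.one_closed[OF K] by (simp add: sym_group_one id_def)
  next
    case (swap a b p)
    have "Transposition.transpose a b \<otimes>\<^bsub>sym_group N\<^esub> p \<in> K"
      using subgroup.m_closed[OF K tr2[OF swap(1,2)]] swap by simp
    then show ?case by (simp add: sym_group_mult comp_def)
  qed
qed

lemma centralizer_cyc:
  assumes z: "z permutes {1..N}" and zN: "z N = N" and zc: "z \<circ> cyc N = cyc N \<circ> z" and N: "1 \<le> N"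
  shows "z = id"
proof -
  have zc': "z (cyc N i) = cyc N (z i)" for i using zc by (metis comp_apply)
  have "z i = i" if "1 \<le> i" "i \<le> N" for i
    using that
  proof (induction i)
    case 0 then show ?case by simp
  next
    case (Suc i)
    show ?case
    proof (cases "i = 0")
      case True
      have "z 1 = z (cyc N N)" using N by (simp add: cyc_def)
      also have "\<dots> = cyc N N" using zc' zN by simp
      finally show ?thesis using True N by (simp add: cyc_def)
    next
      case False
      then have "z i = i" using Suc by auto
      have "z (Suc i) = z (cyc N i)" using False Suc.prems by (simp add: cyc_def)
      also have "\<dots> = cyc N i" using zc' \<open>z i = i\<close> by simp
      finally show ?thesis using False Suc.prems by (simp add: cyc_def)
    qed
  qed
  moreover have "z i = i" if "i \<notin> {1..N}" for i using z that by (simp add: permutes_def)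
  ultimately show ?thesis by (auto simp: fun_eq_iff)
qed



definition cay :: "('a, 'b) monoid_scheme \<Rightarrow> (nat \<Rightarrow> 'a) \<Rightarrow> nat set \<Rightarrow> 'a \<Rightarrow> nat \<Rightarrow> nat" where
  "cay F h I f = (\<lambda>i. if i \<in> I then inv_into I h (f \<otimes>\<^bsub>F\<^esub> h i) else i)"

locale cayley = group F for F (structure) +
  fixes h :: "nat \<Rightarrow> 'a" and I :: "nat set" assumes hb: "bij_betw h I (carrier F)"
begin

lemma h_in: "i \<in> I \<Longrightarrow> h i \<in> carrier F"
  using hb bij_betw_imp_funcset by fastforce

lemma inv_h_in: "x \<in> carrier F \<Longrightarrow> inv_into I h x \<in> I"
  using hb by (metis bij_betw_def inv_into_into)

lemma h_inv_h: "x \<in> carrier F \<Longrightarrow> h (inv_into I h x) = x"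
  using hb by (metis bij_betw_def f_inv_into_f)

lemma inv_h_h: "i \<in> I \<Longrightarrow> inv_into I h (h i) = i"
  using hb by (metis bij_betw_def inv_into_f_f)

lemma cay_in: "f \<in> carrier F \<Longrightarrow> i \<in> I \<Longrightarrow> cay F h I f i \<in> I"
  by (simp add: cay_def inv_h_in h_in)

lemma cay_mult: "f \<in> carrier F \<Longrightarrow> g \<in> carrier F \<Longrightarrow> cay F h I (f \<otimes> g) = cay F h I f \<circ> cay F h I g"
proof (rule ext)
  fix i assume f: "f \<in> carrier F" and g: "g \<in> carrier F"
  show "cay F h I (f \<otimes> g) i = (cay F h I f \<circ> cay F h I g) i"
  proof (cases "i \<in> I")
    case True
    then show ?thesis using f g
      by (simp add: cay_def inv_h_in h_in h_inv_h m_assoc)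
  next
    case False then show ?thesis by (simp add: cay_def)
  qed
qed

lemma cay_one: "cay F h I \<one> = id"
  by (rule ext) (simp add: cay_def h_in inv_h_h)

lemma cay_permutes: assumes f: "f \<in> carrier F" shows "cay F h I f permutes I"
proof (rule bij_imp_permutes)
  show "bij_betw (cay F h I f) I I"
  proof (rule bij_betw_imageI)
    show "inj_on (cay F h I f) I"
    proof (rule inj_onI)
      fix i j assume i: "i \<in> I" and j: "j \<in> I" and e: "cay F h I f i = cay F h I f j"
      then have "h (cay F h I f i) = h (cay F h I f j)" by simp
      then have "f \<otimes> h i = f \<otimes> h j" using i j f by (simp add: cay_def h_inv_h h_in)
      then have "h i = h j" using f h_in i j by simp
      then show "i = j" using i j inv_h_h by metis
    qed
    show "cay F h I f ` I = I"
    proof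
      show "cay F h I f ` I \<subseteq> I" using cay_in f by auto
      show "I \<subseteq> cay F h I f ` I"
      proof
        fix i assume i: "i \<in> I"
        let ?j = "inv_into I h (inv f \<otimes> h i)"
        have j: "?j \<in> I" using f i by (simp add: inv_h_in h_in)
        have "cay F h I f ?j = inv_into I h (f \<otimes> (inv f \<otimes> h i))"
          using j f i by (simp add: cay_def h_inv_h h_in)
        also have "\<dots> = i" using f i by (simp add: h_in inv_h_h m_assoc[symmetric])
        finally show "i \<in> cay F h I f ` I" using j by force
      qed
    qed
  qed
  show "\<And>x. x \<notin> I \<Longrightarrow> cay F h I f x = x" by (simp add: cay_def)
qed

lemma cay_inj: assumes f: "f \<in> carrier F" and g: "g \<in> carrier F" and e: "cay F h I f = cay F h I g"
  shows "f = g"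
proof -
  let ?i = "inv_into I h \<one>"
  have i: "?i \<in> I" by (simp add: inv_h_in)
  have "h (cay F h I f ?i) = h (cay F h I g ?i)" using e by simp
  then show ?thesis using i f g by (simp add: cay_def h_inv_h)
qed

lemma cay_fix: "k \<notin> I \<Longrightarrow> cay F h I f k = k" by (simp add: cay_def)

end



lemma raag_letters_comm:
  assumes all: "\<forall>x\<in>V. \<forall>y\<in>V. x \<noteq> y \<longrightarrow> E x y" and p: "p \<in> V \<times> UNIV" and q: "q \<in> V \<times> UNIV"
  shows "([p,q],[q,p]) \<in> raag_rel V E"
proof -
  obtain x b y c where pq: "p = (x,b)" "q = (y,c)" by force
  show ?thesis
  proof (cases "x = y")
    case False
    then have "E x y" using all p q pq by auto
    from raag_step.commute[where E=E and x=x and y=y and V=V and u="[]" and b=b and c=c and w="[]", OF this]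
    show ?thesis unfolding raag_rel_def using pq by auto
  next
    case True
    show ?thesis
    proof (cases "b = c")
      case True then show ?thesis using pq \<open>x = y\<close> by (simp add: raag_rel_refl)
    next
      case False
      have xV: "x \<in> V" using p pq by auto
      have 1: "([] @ [(x,b),(x,\<not>b)] @ [], [] @ []) \<in> raag_step V E" by (rule raag_step.cancel[OF xV])
      have 2: "([] @ [(x,\<not>b),(x,\<not>\<not>b)] @ [], [] @ []) \<in> raag_step V E" by (rule raag_step.cancel[OF xV])
      have "([p,q], []) \<in> raag_rel V E" using 1 False pq True unfolding raag_rel_def by (cases b; cases c) auto
      moreover have "([q,p], []) \<in> raag_rel V E" using 2 False pq True unfolding raag_rel_def by (cases b; cases c) auto
      ultimately show ?thesis using raag_rel_sym raag_rel_trans by blast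
    qed
  qed
qed

lemma raag_letter_word_comm:
  assumes all: "\<forall>x\<in>V. \<forall>y\<in>V. x \<noteq> y \<longrightarrow> E x y" and p: "p \<in> V \<times> UNIV"
  shows "w \<in> raag_words V \<Longrightarrow> (p # w, w @ [p]) \<in> raag_rel V E"
proof (induction w)
  case Nil then show ?case by (simp add: raag_rel_refl)
next
  case (Cons q w)
  have q: "q \<in> V \<times> UNIV" and w: "w \<in> raag_words V" using Cons.prems by (auto simp: raag_words_def)
  have "([] @ [p,q] @ w, [] @ [q,p] @ w) \<in> raag_rel V E"
    by (rule raag_rel_append[OF raag_letters_comm[OF all p q]])
  moreover have "([q] @ (p # w) @ [], [q] @ (w @ [p]) @ []) \<in> raag_rel V E"
    by (rule raag_rel_append[OF Cons.IH[OF w]])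
  ultimately show ?case using raag_rel_trans by fastforce
qed

lemma raag_word_comm:
  assumes all: "\<forall>x\<in>V. \<forall>y\<in>V. x \<noteq> y \<longrightarrow> E x y" and b: "b \<in> raag_words V"
  shows "a \<in> raag_words V \<Longrightarrow> (a @ b, b @ a) \<in> raag_rel V E"
proof (induction a)
  case Nil then show ?case by (simp add: raag_rel_refl)
next
  case (Cons p a)
  have p: "p \<in> V \<times> UNIV" and a: "a \<in> raag_words V" using Cons.prems by (auto simp: raag_words_def)
  have "([p] @ (a @ b) @ [], [p] @ (b @ a) @ []) \<in> raag_rel V E"
    by (rule raag_rel_append[OF Cons.IH[OF a]])
  moreover have "([] @ (p # b) @ a, [] @ (b @ [p]) @ a) \<in> raag_rel V E"
    by (rule raag_rel_append[OF raag_letter_word_comm[OF all p b]])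
  ultimately show ?case using raag_rel_trans by fastforce
qed

lemma raag_noncomm:
  assumes "\<not> comm_group (RAAG V E)"
  shows "\<exists>u\<in>V. \<exists>v\<in>V. u \<noteq> v \<and> \<not> E u v"
proof (rule ccontr)
  assume "\<not> ?thesis"
  then have all: "\<forall>x\<in>V. \<forall>y\<in>V. x \<noteq> y \<longrightarrow> E x y" by blast
  interpret R: group "RAAG V E" by (rule RAAG_group)
  have "comm_group (RAAG V E)"
  proof (rule R.group_comm_groupI)
    fix x y assume "x \<in> carrier (RAAG V E)" "y \<in> carrier (RAAG V E)"
    then obtain a b where ab: "a \<in> raag_words V" "b \<in> raag_words V" "x = raag_rel V E `` {a}" "y = raag_rel V E `` {b}"
      by (auto simp: RAAG_carrier)
    then show "x \<otimes>\<^bsub>RAAG V E\<^esub> y = y \<otimes>\<^bsub>RAAG V E\<^esub> x"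
      using raag_word_comm[OF all ab(2) ab(1)] by (simp add: RAAG_mult raag_class_eq)
  qed
  with assms show False by simp
qed



lemma (in group) conj_mult:
  assumes "a \<in> carrier G" "b \<in> carrier G" "r \<in> carrier G"
  shows "a \<otimes> (b \<otimes> r \<otimes> inv b) \<otimes> inv a = (a \<otimes> b) \<otimes> r \<otimes> inv (a \<otimes> b)"
  using assms by (simp add: inv_mult_group m_assoc)

lemma (in group) conj_solve:
  assumes "a \<in> carrier G" "r \<in> carrier G" "s \<in> carrier G" "s = a \<otimes> r \<otimes> inv a"
  shows "r = inv a \<otimes> s \<otimes> inv (inv a)"
  using assms by (simp add: group.inv_solve_left' inv_solve_left m_assoc)

lemma (in group) conj_eq_comm:
  assumes "a \<in> carrier G" "b \<in> carrier G" "c \<in> carrier G" "a \<otimes> c \<otimes> inv a = b \<otimes> c \<otimes> inv b"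
  shows "(inv b \<otimes> a) \<otimes> c = c \<otimes> (inv b \<otimes> a)"
proof -
  have "inv b \<otimes> (a \<otimes> c \<otimes> inv a) \<otimes> a = inv b \<otimes> (b \<otimes> c \<otimes> inv b) \<otimes> a" using assms(4) by simp
  moreover have "inv b \<otimes> (a \<otimes> c \<otimes> inv a) \<otimes> a = (inv b \<otimes> a) \<otimes> c" using assms(1-3) by (simp add: inv_solve_left m_assoc)
  moreover have "inv b \<otimes> (b \<otimes> c \<otimes> inv b) \<otimes> a = c \<otimes> (inv b \<otimes> a)" using assms(1-3) by (simp add: m_assoc[symmetric])
  ultimately show ?thesis by metis
qed

lemma (in group) conj_auto: assumes g: "g \<in> carrier G"
  shows "(\<lambda>y\<in>carrier G. g \<otimes> y \<otimes> inv g) \<in> auto G"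
proof -
  have "(\<lambda>y\<in>carrier G. g \<otimes> y \<otimes> inv g) \<in> hom G G"
  proof (rule homI)
    fix x assume "x \<in> carrier G" then show "(\<lambda>y\<in>carrier G. g \<otimes> y \<otimes> inv g) x \<in> carrier G" using g by simp
  next
    fix x y assume "x \<in> carrier G" "y \<in> carrier G"
    then show "(\<lambda>y\<in>carrier G. g \<otimes> y \<otimes> inv g) (x \<otimes> y) = (\<lambda>y\<in>carrier G. g \<otimes> y \<otimes> inv g) x \<otimes> (\<lambda>y\<in>carrier G. g \<otimes> y \<otimes> inv g) y"
      using g by (simp add: m_assoc inv_solve_left)
  qed
  moreover have "(\<lambda>y\<in>carrier G. g \<otimes> y \<otimes> inv g) \<in> Bij (carrier G)"
    unfolding Bij_def using conjugation_is_bij[OF g] by simp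
  ultimately show ?thesis by (simp add: auto_def)
qed

lemma AutoGroup_carrier: "carrier (AutoGroup G) = auto G"
  by (simp add: AutoGroup_def)

lemma AutoGroup_mult: "a \<in> auto G \<Longrightarrow> b \<in> auto G \<Longrightarrow> x \<in> carrier G \<Longrightarrow> (a \<otimes>\<^bsub>AutoGroup G\<^esub> b) x = a (b x)"
  by (simp add: AutoGroup_def BijGroup_def auto_def compose_def)

lemma AutoGroup_one: "x \<in> carrier G \<Longrightarrow> \<one>\<^bsub>AutoGroup G\<^esub> x = x"
  by (simp add: AutoGroup_def BijGroup_def)

lemma AutoGroup_one': "\<one>\<^bsub>AutoGroup G\<^esub> = (\<lambda>x\<in>carrier G. x)"
  by (simp add: AutoGroup_def BijGroup_def)

lemma auto_closed: "a \<in> auto G \<Longrightarrow> x \<in> carrier G \<Longrightarrow> a x \<in> carrier G"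
  by (simp add: auto_def hom_def Pi_iff)

lemma auto_hom: "a \<in> auto G \<Longrightarrow> a \<in> hom G G"
  by (simp add: auto_def)

locale main_setup =
  fixes V :: "'v set" and E :: "'v \<Rightarrow> 'v \<Rightarrow> bool" and F :: "nat monoid"
    and u v :: 'v and h :: "nat \<Rightarrow> nat" and I :: "nat set" and N :: nat
  assumes finV: "finite V"
    and EV: "\<And>x y. E x y \<Longrightarrow> x \<in> V \<and> y \<in> V"
    and Esym: "\<And>x y. E x y \<Longrightarrow> E y x"
    and Eirr: "\<And>x. \<not> E x x"
    and uV: "u \<in> V" and vV: "v \<in> V" and uv: "u \<noteq> v" and nuv: "\<not> E u v"
    and grpF: "group F" and hb: "bij_betw h I (carrier F)"
    and IN: "I \<subseteq> {1..N}" and NI: "N \<notin> I" and N2: "2 \<le> N"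
begin

definition fimg :: "'v \<Rightarrow> nat \<Rightarrow> nat" where
  "fimg x = (if x = u then Transposition.transpose 1 2 else if x = v then cyc N else id)"

definition rho where "rho = raag_hom V E (sym_group N) fimg"

definition L where "L = cay F h I"

definition P where "P a f \<longleftrightarrow> f \<in> carrier F \<and>
   (\<forall>g\<in>carrier (RAAG V E). rho (a g) = L f \<otimes>\<^bsub>sym_group N\<^esub> rho g \<otimes>\<^bsub>sym_group N\<^esub> inv\<^bsub>sym_group N\<^esub> (L f))"

definition Hs where "Hs = {a \<in> auto (RAAG V E). \<exists>f. P a f}"

definition hf where "hf a = (THE f. P a f)"

lemma grpG: "group (RAAG V E)" by (rule RAAG_group)
lemma grpS: "group (sym_group N)" by (rule sym_group_is_group)
lemma grpA: "group (AutoGroup (RAAG V E))" by (rule group.AutoGroup[OF grpG])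

lemma cayF: "cayley F h I" by (intro cayley.intro cayley_axioms.intro grpF hb)

lemma fimg_carrier: "fimg x \<in> carrier (sym_group N)"
  unfolding sym_group_carrier fimg_def using N2 cyc_permutes[of N]
  by (auto intro: permutes_swap_id permutes_id)

lemma fimg_comm: "E x y \<Longrightarrow> fimg x \<otimes>\<^bsub>sym_group N\<^esub> fimg y = fimg y \<otimes>\<^bsub>sym_group N\<^esub> fimg x"
proof -
  assume e: "E x y"
  have xy: "x \<noteq> y" using e Eirr by blast
  have "\<not> (x = u \<and> y = v)" "\<not> (x = v \<and> y = u)" using e nuv Esym by blast+
  then have "fimg x = id \<or> fimg y = id" using xy unfolding fimg_def by auto
  then show ?thesis by (auto simp: sym_group_mult)
qed

lemma rho_hom: "rho \<in> hom (RAAG V E) (sym_group N)"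
  unfolding rho_def by (rule group.raag_hom_hom[OF grpS]) (simp add: fimg_carrier, erule fimg_comm)

lemma rho_gen: "rho (raag_gen V E x) = fimg x"
  unfolding rho_def by (rule group.raag_hom_gen[OF grpS]) (simp add: fimg_carrier, erule fimg_comm)

lemma rho_closed: "g \<in> carrier (RAAG V E) \<Longrightarrow> rho g \<in> carrier (sym_group N)"
  using rho_hom by (simp add: hom_in_carrier)

lemma rho_surj: "carrier (sym_group N) \<subseteq> rho ` carrier (RAAG V E)"
proof
  fix p assume p: "p \<in> carrier (sym_group N)"
  interpret gh: group_hom "RAAG V E" "sym_group N" rho
    by (intro group_hom.intro group_hom_axioms.intro grpG grpS rho_hom)
  have K: "subgroup (rho ` carrier (RAAG V E)) (sym_group N)" by (rule gh.img_is_subgroup)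
  have a: "Transposition.transpose 1 2 \<in> rho ` carrier (RAAG V E)"
    using rho_gen[of u] raag_gen_carrier[OF uV, of E] by (force simp: fimg_def)
  have c: "cyc N \<in> rho ` carrier (RAAG V E)"
    using rho_gen[of v] raag_gen_carrier[OF vV, of E] uv by (force simp: fimg_def)
  show "p \<in> rho ` carrier (RAAG V E)"
    by (rule sym_generated[OF N2 K a c]) (use p in \<open>simp add: sym_group_carrier\<close>)
qed

lemma L_carrier: "f \<in> carrier F \<Longrightarrow> L f \<in> carrier (sym_group N)"
  unfolding L_def sym_group_carrier using cayley.cay_permutes[OF cayF] IN permutes_subset by blast

lemma L_hom: "L \<in> hom F (sym_group N)"
  by (rule homI) (simp_all add: L_carrier, simp add: L_def cayley.cay_mult[OF cayF] sym_group_mult)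

lemma L_one: "L \<one>\<^bsub>F\<^esub> = \<one>\<^bsub>sym_group N\<^esub>"
  by (simp add: L_def cayley.cay_one[OF cayF] sym_group_one)

lemma L_inj: "f1 \<in> carrier F \<Longrightarrow> f2 \<in> carrier F \<Longrightarrow> L f1 = L f2 \<Longrightarrow> f1 = f2"
  unfolding L_def by (rule cayley.cay_inj[OF cayF])

lemma L_N: "L f N = N"
  unfolding L_def using cayley.cay_fix[OF cayF NI] .

lemma L_unique:
  assumes f1: "f1 \<in> carrier F" and f2: "f2 \<in> carrier F"
    and e: "L f1 \<otimes>\<^bsub>sym_group N\<^esub> cyc N \<otimes>\<^bsub>sym_group N\<^esub> inv\<^bsub>sym_group N\<^esub> (L f1)
          = L f2 \<otimes>\<^bsub>sym_group N\<^esub> cyc N \<otimes>\<^bsub>sym_group N\<^esub> inv\<^bsub>sym_group N\<^esub> (L f2)"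
  shows "f1 = f2"
proof -
  interpret S: group "sym_group N" by (rule grpS)
  interpret FF: group F by (rule grpF)
  interpret gh: group_hom F "sym_group N" L
    by (intro group_hom.intro group_hom_axioms.intro grpF grpS L_hom)
  have cc: "cyc N \<in> carrier (sym_group N)" using cyc_permutes[of N] N2 by (simp add: sym_group_carrier)
  define z where "z = inv\<^bsub>F\<^esub> f2 \<otimes>\<^bsub>F\<^esub> f1"
  have zF: "z \<in> carrier F" using f1 f2 by (simp add: z_def)
  have Lz: "L z = inv\<^bsub>sym_group N\<^esub> (L f2) \<otimes>\<^bsub>sym_group N\<^esub> L f1"
    using f1 f2 by (simp add: z_def)
  have comm: "L z \<otimes>\<^bsub>sym_group N\<^esub> cyc N = cyc N \<otimes>\<^bsub>sym_group N\<^esub> L z"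
    unfolding Lz by (rule S.conj_eq_comm[OF L_carrier[OF f1] L_carrier[OF f2] cc e])
  have "L z = id"
  proof (rule centralizer_cyc)
    show "L z permutes {1..N}" using L_carrier[OF zF] by (simp add: sym_group_carrier)
    show "L z N = N" by (rule L_N)
    show "L z \<circ> cyc N = cyc N \<circ> L z" using comm by (simp add: sym_group_mult)
    show "1 \<le> N" using N2 by simp
  qed
  then have "L z = L \<one>\<^bsub>F\<^esub>" by (simp add: L_one sym_group_one)
  then have "z = \<one>\<^bsub>F\<^esub>" using L_inj zF by simp
  then show ?thesis using f1 f2 unfolding z_def by (metis FF.inv_closed FF.inv_inv FF.inv_equality FF.l_inv)
qed

lemma P_unique: "P a f1 \<Longrightarrow> P a f2 \<Longrightarrow> f1 = f2"
proof -
  assume p1: "P a f1" and p2: "P a f2"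
  have g: "raag_gen V E v \<in> carrier (RAAG V E)" by (rule raag_gen_carrier[OF vV])
  have rg: "rho (raag_gen V E v) = cyc N" using rho_gen[of v] uv by (simp add: fimg_def)
  show "f1 = f2" using p1 p2 g rg unfolding P_def by (intro L_unique) auto
qed

lemma hf_P: assumes "a \<in> Hs" shows "P a (hf a)"
proof -
  from assms obtain f where f: "P a f" by (auto simp: Hs_def)
  show ?thesis unfolding hf_def by (rule theI[where P="P a", OF f]) (rule P_unique[OF _ f])
qed

lemma hf_eq: "P a f \<Longrightarrow> hf a = f"
  unfolding hf_def using P_unique by blast

end



context main_setup begin

lemma P_mult:
  assumes a: "a \<in> auto (RAAG V E)" and b: "b \<in> auto (RAAG V E)" and pa: "P a fa" and pb: "P b fb"
  shows "P (a \<otimes>\<^bsub>AutoGroup (RAAG V E)\<^esub> b) (fa \<otimes>\<^bsub>F\<^esub> fb)"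
proof -
  interpret S: group "sym_group N" by (rule grpS)
  interpret FF: group F by (rule grpF)
  interpret gh: group_hom F "sym_group N" L
    by (intro group_hom.intro group_hom_axioms.intro grpF grpS L_hom)
  have fa: "fa \<in> carrier F" and fb: "fb \<in> carrier F" using pa pb by (auto simp: P_def)
  show ?thesis unfolding P_def
  proof (intro conjI ballI)
    show "fa \<otimes>\<^bsub>F\<^esub> fb \<in> carrier F" using fa fb by simp
    fix g assume g: "g \<in> carrier (RAAG V E)"
    have bg: "b g \<in> carrier (RAAG V E)" using auto_closed[OF b g] .
    have "rho ((a \<otimes>\<^bsub>AutoGroup (RAAG V E)\<^esub> b) g) = rho (a (b g))" using AutoGroup_mult[OF a b g] by simp
    also have "\<dots> = L fa \<otimes>\<^bsub>sym_group N\<^esub> rho (b g) \<otimes>\<^bsub>sym_group N\<^esub> inv\<^bsub>sym_group N\<^esub> (L fa)"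
      using pa bg by (simp add: P_def)
    also have "\<dots> = L fa \<otimes>\<^bsub>sym_group N\<^esub> (L fb \<otimes>\<^bsub>sym_group N\<^esub> rho g \<otimes>\<^bsub>sym_group N\<^esub> inv\<^bsub>sym_group N\<^esub> (L fb)) \<otimes>\<^bsub>sym_group N\<^esub> inv\<^bsub>sym_group N\<^esub> (L fa)"
      using pb g by (simp add: P_def)
    also have "\<dots> = (L fa \<otimes>\<^bsub>sym_group N\<^esub> L fb) \<otimes>\<^bsub>sym_group N\<^esub> rho g \<otimes>\<^bsub>sym_group N\<^esub> inv\<^bsub>sym_group N\<^esub> (L fa \<otimes>\<^bsub>sym_group N\<^esub> L fb)"
      by (rule S.conj_mult[OF L_carrier[OF fa] L_carrier[OF fb] rho_closed[OF g]])
    also have "\<dots> = L (fa \<otimes>\<^bsub>F\<^esub> fb) \<otimes>\<^bsub>sym_group N\<^esub> rho g \<otimes>\<^bsub>sym_group N\<^esub> inv\<^bsub>sym_group N\<^esub> (L (fa \<otimes>\<^bsub>F\<^esub> fb))"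
      using fa fb by simp
    finally show "rho ((a \<otimes>\<^bsub>AutoGroup (RAAG V E)\<^esub> b) g) = L (fa \<otimes>\<^bsub>F\<^esub> fb) \<otimes>\<^bsub>sym_group N\<^esub> rho g \<otimes>\<^bsub>sym_group N\<^esub> inv\<^bsub>sym_group N\<^esub> (L (fa \<otimes>\<^bsub>F\<^esub> fb))" .
  qed
qed

lemma P_inv:
  assumes a: "a \<in> auto (RAAG V E)" and pa: "P a f"
  shows "P (inv\<^bsub>AutoGroup (RAAG V E)\<^esub> a) (inv\<^bsub>F\<^esub> f)"
proof -
  interpret S: group "sym_group N" by (rule grpS)
  interpret FF: group F by (rule grpF)
  interpret A: group "AutoGroup (RAAG V E)" by (rule grpA)
  interpret gh: group_hom F "sym_group N" L
    by (intro group_hom.intro group_hom_axioms.intro grpF grpS L_hom)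
  have f: "f \<in> carrier F" using pa by (simp add: P_def)
  let ?b = "inv\<^bsub>AutoGroup (RAAG V E)\<^esub> a"
  have aA: "a \<in> carrier (AutoGroup (RAAG V E))" using a by (simp add: AutoGroup_carrier)
  have b: "?b \<in> auto (RAAG V E)" using A.inv_closed[OF aA] by (simp add: AutoGroup_carrier)
  show ?thesis unfolding P_def
  proof (intro conjI ballI)
    show "inv\<^bsub>F\<^esub> f \<in> carrier F" using f by simp
    fix g assume g: "g \<in> carrier (RAAG V E)"
    have bg: "?b g \<in> carrier (RAAG V E)" using auto_closed[OF b g] .
    have "a (?b g) = (a \<otimes>\<^bsub>AutoGroup (RAAG V E)\<^esub> ?b) g" using AutoGroup_mult[OF a b g] by simp
    also have "\<dots> = g" using A.r_inv[OF aA] AutoGroup_one[OF g] by simp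
    finally have abg: "a (?b g) = g" .
    have "rho g = L f \<otimes>\<^bsub>sym_group N\<^esub> rho (?b g) \<otimes>\<^bsub>sym_group N\<^esub> inv\<^bsub>sym_group N\<^esub> (L f)"
      using pa bg abg unfolding P_def by metis
    then have "rho (?b g) = inv\<^bsub>sym_group N\<^esub> (L f) \<otimes>\<^bsub>sym_group N\<^esub> rho g \<otimes>\<^bsub>sym_group N\<^esub> inv\<^bsub>sym_group N\<^esub> (inv\<^bsub>sym_group N\<^esub> (L f))"
      by (intro S.conj_solve L_carrier f rho_closed g bg)
    then show "rho (?b g) = L (inv\<^bsub>F\<^esub> f) \<otimes>\<^bsub>sym_group N\<^esub> rho g \<otimes>\<^bsub>sym_group N\<^esub> inv\<^bsub>sym_group N\<^esub> (L (inv\<^bsub>F\<^esub> f))"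
      using f by simp
  qed
qed

lemma Hs_subgroup: "subgroup Hs (AutoGroup (RAAG V E))"
proof -
  interpret S: group "sym_group N" by (rule grpS)
  interpret FF: group F by (rule grpF)
  interpret A: group "AutoGroup (RAAG V E)" by (rule grpA)
  show ?thesis
  proof (rule A.subgroupI)
    show "Hs \<subseteq> carrier (AutoGroup (RAAG V E))" by (auto simp: Hs_def AutoGroup_carrier)
    have one: "\<one>\<^bsub>AutoGroup (RAAG V E)\<^esub> \<in> auto (RAAG V E)" using A.one_closed by (simp add: AutoGroup_carrier)
    have "P \<one>\<^bsub>AutoGroup (RAAG V E)\<^esub> \<one>\<^bsub>F\<^esub>"
      unfolding P_def using rho_closed by (simp add: AutoGroup_one L_one)
    then show "Hs \<noteq> {}" using one by (auto simp: Hs_def)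
  next
    fix a assume "a \<in> Hs"
    then obtain f where a: "a \<in> auto (RAAG V E)" and pa: "P a f" by (auto simp: Hs_def)
    have "inv\<^bsub>AutoGroup (RAAG V E)\<^esub> a \<in> auto (RAAG V E)"
      using A.inv_closed a by (simp add: AutoGroup_carrier)
    then show "inv\<^bsub>AutoGroup (RAAG V E)\<^esub> a \<in> Hs" using P_inv[OF a pa] by (auto simp: Hs_def)
  next
    fix a b assume "a \<in> Hs" "b \<in> Hs"
    then obtain fa fb where a: "a \<in> auto (RAAG V E)" and pa: "P a fa" and b: "b \<in> auto (RAAG V E)" and pb: "P b fb"
      by (auto simp: Hs_def)
    have "a \<otimes>\<^bsub>AutoGroup (RAAG V E)\<^esub> b \<in> auto (RAAG V E)"
      using A.m_closed a b by (simp add: AutoGroup_carrier)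
    then show "a \<otimes>\<^bsub>AutoGroup (RAAG V E)\<^esub> b \<in> Hs" using P_mult[OF a b pa pb] by (auto simp: Hs_def)
  qed
qed

lemma hf_hom: "hf \<in> hom ((AutoGroup (RAAG V E))\<lparr>carrier := Hs\<rparr>) F"
proof (rule homI)
  fix a assume "a \<in> carrier ((AutoGroup (RAAG V E))\<lparr>carrier := Hs\<rparr>)"
  then have "a \<in> Hs" by simp
  then show "hf a \<in> carrier F" using hf_P by (simp add: P_def)
next
  fix a b assume "a \<in> carrier ((AutoGroup (RAAG V E))\<lparr>carrier := Hs\<rparr>)" "b \<in> carrier ((AutoGroup (RAAG V E))\<lparr>carrier := Hs\<rparr>)"
  then have a: "a \<in> Hs" and b: "b \<in> Hs" by simp_all
  have "P (a \<otimes>\<^bsub>AutoGroup (RAAG V E)\<^esub> b) (hf a \<otimes>\<^bsub>F\<^esub> hf b)"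
    using a b by (intro P_mult hf_P) (auto simp: Hs_def)
  then show "hf (a \<otimes>\<^bsub>(AutoGroup (RAAG V E))\<lparr>carrier := Hs\<rparr>\<^esub> b) = hf a \<otimes>\<^bsub>F\<^esub> hf b"
    by (simp add: hf_eq)
qed

lemma hf_surj: "hf ` Hs = carrier F"
proof
  show "hf ` Hs \<subseteq> carrier F" using hf_P by (auto simp: P_def)
  show "carrier F \<subseteq> hf ` Hs"
  proof
    fix f assume f: "f \<in> carrier F"
    interpret RG: group "RAAG V E" by (rule grpG)
    interpret gr: group_hom "RAAG V E" "sym_group N" rho
      by (intro group_hom.intro group_hom_axioms.intro grpG grpS rho_hom)
    obtain g0 where g0: "g0 \<in> carrier (RAAG V E)" "rho g0 = L f"
      using subsetD[OF rho_surj L_carrier[OF f]] by (rule imageE) simp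
    let ?c = "\<lambda>y\<in>carrier (RAAG V E). g0 \<otimes>\<^bsub>RAAG V E\<^esub> y \<otimes>\<^bsub>RAAG V E\<^esub> inv\<^bsub>RAAG V E\<^esub> g0"
    have c: "?c \<in> auto (RAAG V E)" by (rule RG.conj_auto[OF g0(1)])
    have "P ?c f" unfolding P_def
    proof (intro conjI ballI)
      show "f \<in> carrier F" by (rule f)
      fix g assume g: "g \<in> carrier (RAAG V E)"
      show "rho (?c g) = L f \<otimes>\<^bsub>sym_group N\<^esub> rho g \<otimes>\<^bsub>sym_group N\<^esub> inv\<^bsub>sym_group N\<^esub> (L f)"
      proof -
        have "?c g = g0 \<otimes>\<^bsub>RAAG V E\<^esub> g \<otimes>\<^bsub>RAAG V E\<^esub> inv\<^bsub>RAAG V E\<^esub> g0" using g by simp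
        then have "rho (?c g) = rho (g0 \<otimes>\<^bsub>RAAG V E\<^esub> g \<otimes>\<^bsub>RAAG V E\<^esub> inv\<^bsub>RAAG V E\<^esub> g0)" by simp
        also have "\<dots> = rho g0 \<otimes>\<^bsub>sym_group N\<^esub> rho g \<otimes>\<^bsub>sym_group N\<^esub> inv\<^bsub>sym_group N\<^esub> (rho g0)"
          using g g0(1) by simp
        finally show ?thesis using g0(2) by simp
      qed
    qed
    then have Pc: "P ?c f" .
    have cH: "?c \<in> Hs" using c Pc unfolding Hs_def by blast
    have "hf ?c = f" by (rule hf_eq[OF Pc])
    then show "f \<in> hf ` Hs" using cH by force
  qed
qed

definition key where "key a = (\<lambda>x\<in>V. rho (a (raag_gen V E x)))"

lemma key_eq:
  assumes a: "a \<in> auto (RAAG V E)" and b: "b \<in> auto (RAAG V E)" and k: "key a = key b"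
    and g: "g \<in> carrier (RAAG V E)"
  shows "rho (a g) = rho (b g)"
proof -
  have ha: "rho \<circ> a \<in> hom (RAAG V E) (sym_group N)" by (rule hom_compose[OF auto_hom[OF a] rho_hom])
  have hb': "rho \<circ> b \<in> hom (RAAG V E) (sym_group N)" by (rule hom_compose[OF auto_hom[OF b] rho_hom])
  have "(rho \<circ> a) g = (rho \<circ> b) g"
  proof (rule raag_hom_ext[OF grpS ha hb' _ g])
    fix x assume x: "x \<in> V"
    have "key a x = key b x" using k by simp
    then show "(rho \<circ> a) (raag_gen V E x) = (rho \<circ> b) (raag_gen V E x)" using x by (simp add: key_def)
  qed
  then show ?thesis by simp
qed

lemma coset_eq:
  assumes a: "a \<in> auto (RAAG V E)" and b: "b \<in> auto (RAAG V E)" and k: "key a = key b"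
  shows "Hs #>\<^bsub>AutoGroup (RAAG V E)\<^esub> a = Hs #>\<^bsub>AutoGroup (RAAG V E)\<^esub> b"
proof -
  interpret A: group "AutoGroup (RAAG V E)" by (rule grpA)
  interpret FF: group F by (rule grpF)
  interpret S: group "sym_group N" by (rule grpS)
  have aA: "a \<in> carrier (AutoGroup (RAAG V E))" and bA: "b \<in> carrier (AutoGroup (RAAG V E))"
    using a b by (simp_all add: AutoGroup_carrier)
  let ?ia = "inv\<^bsub>AutoGroup (RAAG V E)\<^esub> a"
  let ?c = "b \<otimes>\<^bsub>AutoGroup (RAAG V E)\<^esub> ?ia"
  have ia: "?ia \<in> auto (RAAG V E)" using A.inv_closed[OF aA] by (simp add: AutoGroup_carrier)
  have cA: "?c \<in> carrier (AutoGroup (RAAG V E))" using bA aA by simp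
  have c: "?c \<in> auto (RAAG V E)" using cA by (simp add: AutoGroup_carrier)
  have "P ?c \<one>\<^bsub>F\<^esub>" unfolding P_def
  proof (intro conjI ballI)
    show "\<one>\<^bsub>F\<^esub> \<in> carrier F" by simp
    fix g assume g: "g \<in> carrier (RAAG V E)"
    have iag: "?ia g \<in> carrier (RAAG V E)" using auto_closed[OF ia g] .
    have aia: "a (?ia g) = g"
      using AutoGroup_mult[OF a ia g] A.r_inv[OF aA] AutoGroup_one[OF g] by simp
    have "rho (?c g) = rho (b (?ia g))" using AutoGroup_mult[OF b ia g] by simp
    also have "\<dots> = rho (a (?ia g))" using key_eq[OF a b k iag] by simp
    also have "\<dots> = rho g" using aia by simp
    finally show "rho (?c g) = L \<one>\<^bsub>F\<^esub> \<otimes>\<^bsub>sym_group N\<^esub> rho g \<otimes>\<^bsub>sym_group N\<^esub> inv\<^bsub>sym_group N\<^esub> (L \<one>\<^bsub>F\<^esub>)"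
      using rho_closed[OF g] by (simp add: L_one)
  qed
  then have cH: "?c \<in> Hs" using c by (auto simp: Hs_def)
  have "?c \<otimes>\<^bsub>AutoGroup (RAAG V E)\<^esub> a = b" using aA bA by (simp add: A.m_assoc)
  moreover have "?c \<otimes>\<^bsub>AutoGroup (RAAG V E)\<^esub> a \<in> Hs #>\<^bsub>AutoGroup (RAAG V E)\<^esub> a"
    by (rule A.rcosI[OF cH subgroup.subset[OF Hs_subgroup] aA])
  ultimately have "b \<in> Hs #>\<^bsub>AutoGroup (RAAG V E)\<^esub> a" by simp
  then show ?thesis by (rule A.repr_independence[OF _ aA Hs_subgroup])
qed

lemma finite_cosets: "finite (rcosets\<^bsub>AutoGroup (RAAG V E)\<^esub> Hs)"
proof -
  let ?K = "key ` auto (RAAG V E)"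
  have fK: "finite ?K"
  proof (rule finite_subset)
    show "?K \<subseteq> PiE V (\<lambda>_. carrier (sym_group N))"
    proof
      fix k assume "k \<in> ?K"
      then obtain a where a: "a \<in> auto (RAAG V E)" and k: "k = key a" by blast
      have "\<And>x. x \<in> V \<Longrightarrow> rho (a (raag_gen V E x)) \<in> carrier (sym_group N)"
        by (rule rho_closed[OF auto_closed[OF a raag_gen_carrier]])
      then show "k \<in> PiE V (\<lambda>_. carrier (sym_group N))" unfolding k key_def by auto
    qed
    show "finite (PiE V (\<lambda>_. carrier (sym_group N)))"
      by (intro finite_PiE finV) (simp add: sym_group_def finite_permutations)
  qed
  have "rcosets\<^bsub>AutoGroup (RAAG V E)\<^esub> Hs \<subseteq> (\<lambda>k. Hs #>\<^bsub>AutoGroup (RAAG V E)\<^esub> (SOME a. a \<in> auto (RAAG V E) \<and> key a = k)) ` ?K"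
  proof
    fix Y assume "Y \<in> rcosets\<^bsub>AutoGroup (RAAG V E)\<^esub> Hs"
    then obtain a where aA: "a \<in> carrier (AutoGroup (RAAG V E))" and Y: "Y = Hs #>\<^bsub>AutoGroup (RAAG V E)\<^esub> a"
      unfolding RCOSETS_def by blast
    have a: "a \<in> auto (RAAG V E)" using aA by (simp add: AutoGroup_carrier)
    let ?b = "SOME b. b \<in> auto (RAAG V E) \<and> key b = key a"
    have b: "?b \<in> auto (RAAG V E) \<and> key ?b = key a" by (rule someI[of _ a]) (simp add: a)
    have "Y = Hs #>\<^bsub>AutoGroup (RAAG V E)\<^esub> ?b"
      using coset_eq[OF a conjunct1[OF b] conjunct2[OF b, symmetric]] Y by simp
    then have "Y = (\<lambda>k. Hs #>\<^bsub>AutoGroup (RAAG V E)\<^esub> (SOME a. a \<in> auto (RAAG V E) \<and> key a = k)) (key a)"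
      by simp
    moreover have "key a \<in> ?K" using a by (rule imageI)
    ultimately show "Y \<in> (\<lambda>k. Hs #>\<^bsub>AutoGroup (RAAG V E)\<^esub> (SOME a. a \<in> auto (RAAG V E) \<and> key a = k)) ` ?K"
      by (rule image_eqI)
  qed
  then show ?thesis by (rule finite_surj[OF fK])
qed

end


theorem proposition1p7:
  fixes V :: "'v set" and E :: "'v \<Rightarrow> 'v \<Rightarrow> bool"
  assumes "finite V"
    and "\<And>x y. E x y \<Longrightarrow> x \<in> V \<and> y \<in> V"
    and "\<And>x y. E x y \<Longrightarrow> E y x"
    and "\<And>x. \<not> E x x"
    and "\<not> comm_group (RAAG V E)"
  shows "involves_all_finite_groups (AutoGroup (RAAG V E))"
  unfolding involves_all_finite_groups_def
proof (intro allI impI)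
  fix F :: "nat monoid"
  assume FF: "group F \<and> finite (carrier F)"
  obtain u v where uv: "u \<in> V" "v \<in> V" "u \<noteq> v" "\<not> E u v" using raag_noncomm[OF assms(5)] by blast
  obtain h where hb: "bij_betw h {1..card (carrier F)} (carrier F)"
    using ex_bij_betw_nat_finite_1 FF by blast
  interpret M: main_setup V E F u v h "{1..card (carrier F)}" "card (carrier F) + 2"
    by (rule main_setup.intro) (use assms uv FF hb in auto)
  show "\<exists>H. subgroup H (AutoGroup (RAAG V E)) \<and> finite (rcosets\<^bsub>AutoGroup (RAAG V E)\<^esub> H) \<and>
           (\<exists>h. h \<in> hom ((AutoGroup (RAAG V E))\<lparr>carrier := H\<rparr>) F \<and> h ` H = carrier F)"
    using M.Hs_subgroup M.finite_cosets M.hf_hom M.hf_surj by blast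
qed

end
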